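(* Let $A$ be an abelian group such that every uniformly fully inert subgroup of $A\oplus A$ is commensurable with some fully invariant subgroup of $A\oplus A$. Then every uniformly fully inert subgroup of $A$ is commensurable with some fully invariant subgroup of $A$.
   Context: All groups are additively written abelian groups. A subgroup $F$ of a group $G$ is fully invariant if $\phi(F)\subseteq F$ for every endomorphism $\phi$ of $G$. A subgroup $S$ of $G$ is uniformly fully inert if there is a fixed positive integer $m$ such that $(\phi(S)+S)/S$ has at most $m$ elements for every endomorphism $\phi$ of $G$. Subgroups $B,C$ of $G$ are commensurable if both $(B+C)/B$ and $(B+C)/C$ are finite. *)

theory Defs
  imports Main "HOL-Library.Product_Plus"
begin

text \<open>Abelian groups are types of class ab_group_add; A (+) A is the product type.\<close>

definition is_subgroup :: "'a::ab_group_add set \<Rightarrow> bool" where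
  "is_subgroup S \<longleftrightarrow> 0 \<in> S \<and> (\<forall>x\<in>S. \<forall>y\<in>S. x + y \<in> S) \<and> (\<forall>x\<in>S. - x \<in> S)"

definition is_endo :: "('a::ab_group_add \<Rightarrow> 'a) \<Rightarrow> bool" where
  "is_endo f \<longleftrightarrow> (\<forall>x y. f (x + y) = f x + f y)"

definition set_sum :: "'a::ab_group_add set \<Rightarrow> 'a set \<Rightarrow> 'a set" where
  "set_sum B C = {b + c | b c. b \<in> B \<and> c \<in> C}"

definition coset :: "'a::ab_group_add \<Rightarrow> 'a set \<Rightarrow> 'a set" where
  "coset x S = (\<lambda>s. x + s) ` S"

definition quot :: "'a::ab_group_add set \<Rightarrow> 'a set \<Rightarrow> 'a set set" where
  "quot T S = {coset x S | x. x \<in> T}"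

definition fully_invariant :: "'a::ab_group_add set \<Rightarrow> bool" where
  "fully_invariant F \<longleftrightarrow> is_subgroup F \<and> (\<forall>f. is_endo f \<longrightarrow> f ` F \<subseteq> F)"

definition uniformly_fully_inert :: "'a::ab_group_add set \<Rightarrow> bool" where
  "uniformly_fully_inert S \<longleftrightarrow> is_subgroup S \<and>
     (\<exists>m::nat. m > 0 \<and> (\<forall>f. is_endo f \<longrightarrow>
        finite (quot (set_sum (f ` S) S) S) \<and> card (quot (set_sum (f ` S) S) S) \<le> m))"

definition commensurable :: "'a::ab_group_add set \<Rightarrow> 'a set \<Rightarrow> bool" where
  "commensurable B C \<longleftrightarrow> finite (quot (set_sum B C) B) \<and> finite (quot (set_sum B C) C)"

end

theory Submission
  imports Defs
begin

lemma sg_diff: "is_subgroup S \<Longrightarrow> a \<in> S \<Longrightarrow> b \<in> S \<Longrightarrow> a - b \<in> S"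
  unfolding is_subgroup_def by (metis diff_conv_add_uminus)

lemma coset_char: "coset x F = {y. y - x \<in> F}"
proof (intro set_eqI iffI)
  fix y assume "y \<in> coset x F" then show "y \<in> {y. y - x \<in> F}" unfolding coset_def by auto
next
  fix y assume "y \<in> {y. y - x \<in> F}"
  then have "y - x \<in> F" "y = x + (y - x)" by auto
  then show "y \<in> coset x F" unfolding coset_def by blast
qed

lemma quot_img:
  assumes "is_subgroup S"
  shows "quot (set_sum X S) S = (\<lambda>x. coset x S) ` X"
proof -
  have e: "coset (x + s) S = coset x S" if "s \<in> S" for x s
  proof -
    have "y - (x + s) \<in> S \<longleftrightarrow> y - x \<in> S" for y
    proof
      assume "y - (x + s) \<in> S"
      then have "(y - (x + s)) + s \<in> S" using assms that unfolding is_subgroup_def by blast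
      then show "y - x \<in> S" by (simp add: algebra_simps)
    next
      assume "y - x \<in> S"
      then have "(y - x) - s \<in> S" using sg_diff assms that by blast
      then show "y - (x + s) \<in> S" by (simp add: algebra_simps)
    qed
    then show ?thesis by (simp add: coset_char)
  qed
  have z: "0 \<in> S" using assms unfolding is_subgroup_def by blast
  show ?thesis
  proof
    show "quot (set_sum X S) S \<subseteq> (\<lambda>x. coset x S) ` X"
      unfolding quot_def set_sum_def using e by auto
    show "(\<lambda>x. coset x S) ` X \<subseteq> quot (set_sum X S) S"
    proof
      fix D assume "D \<in> (\<lambda>x. coset x S) ` X"
      then obtain x where "x \<in> X" "D = coset x S" by blast
      moreover have "x \<in> set_sum X S" unfolding set_sum_def using z \<open>x \<in> X\<close>
        by (metis (mono_tags, lifting) add_0_right mem_Collect_eq)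
      ultimately show "D \<in> quot (set_sum X S) S" unfolding quot_def by blast
    qed
  qed
qed

lemma coset_add:
  assumes "is_subgroup S"
  shows "coset (a + b) S = set_sum (coset a S) (coset b S)"
proof -
  have z: "0 \<in> S" using assms unfolding is_subgroup_def by blast
  show ?thesis
  proof (intro set_eqI iffI)
    fix y assume "y \<in> coset (a + b) S"
    then obtain s where s: "s \<in> S" "y = a + b + s" unfolding coset_def by blast
    have "a + 0 \<in> coset a S" "b + s \<in> coset b S" using s z unfolding coset_def by auto
    moreover have "y = (a + 0) + (b + s)" using s by (simp add: algebra_simps)
    ultimately show "y \<in> set_sum (coset a S) (coset b S)" unfolding set_sum_def by blast
  next
    fix y assume "y \<in> set_sum (coset a S) (coset b S)"
    then obtain s t where st: "s \<in> S" "t \<in> S" "y = (a + s) + (b + t)"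
      unfolding set_sum_def coset_def by blast
    then have "s + t \<in> S" using assms unfolding is_subgroup_def by blast
    moreover have "y = a + b + (s + t)" using st by (simp add: algebra_simps)
    ultimately show "y \<in> coset (a + b) S" unfolding coset_def by blast
  qed
qed

lemma coset_prod: "coset (x, y) (S \<times> T) = coset x S \<times> coset y T"
  by (auto simp: coset_char)

lemma sg_prod: "is_subgroup S \<Longrightarrow> is_subgroup (S \<times> S)"
  unfolding is_subgroup_def by (auto simp: zero_prod_def)

lemma endo_comp:
  assumes "is_endo (\<phi> :: 'a::ab_group_add \<times> 'a \<Rightarrow> 'a \<times> 'a)"
  shows "is_endo (\<lambda>a. fst (\<phi> (a, 0)))" "is_endo (\<lambda>a. fst (\<phi> (0, a)))"
        "is_endo (\<lambda>a. snd (\<phi> (a, 0)))" "is_endo (\<lambda>a. snd (\<phi> (0, a)))"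
        "\<phi> (x, y) = (fst (\<phi> (x, 0)) + fst (\<phi> (0, y)), snd (\<phi> (x, 0)) + snd (\<phi> (0, y)))"
proof -
  have h: "\<phi> (p + q) = \<phi> p + \<phi> q" for p q using assms unfolding is_endo_def by blast
  have "\<phi> ((a + b, 0)) = \<phi> (a, 0) + \<phi> (b, 0)" for a b using h[of "(a,0)" "(b,0)"] by simp
  moreover have "\<phi> ((0, a + b)) = \<phi> (0, a) + \<phi> (0, b)" for a b using h[of "(0,a)" "(0,b)"] by simp
  ultimately show "is_endo (\<lambda>a. fst (\<phi> (a, 0)))" "is_endo (\<lambda>a. fst (\<phi> (0, a)))"
        "is_endo (\<lambda>a. snd (\<phi> (a, 0)))" "is_endo (\<lambda>a. snd (\<phi> (0, a)))"
    unfolding is_endo_def by auto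
  have "\<phi> (x, y) = \<phi> (x, 0) + \<phi> (0, y)" using h[of "(x,0)" "(0,y)"] by simp
  then show "\<phi> (x, y) = (fst (\<phi> (x, 0)) + fst (\<phi> (0, y)), snd (\<phi> (x, 0)) + snd (\<phi> (0, y)))"
    by (metis fst_add snd_add prod.collapse)
qed

lemma ufi_prod:
  assumes "uniformly_fully_inert (S :: 'a::ab_group_add set)"
  shows "uniformly_fully_inert (S \<times> S)"
proof -
  have sg: "is_subgroup S" using assms unfolding uniformly_fully_inert_def by blast
  obtain m :: nat where m: "m > 0" and
    hm: "\<And>f. is_endo f \<Longrightarrow> finite ((\<lambda>x. coset x S) ` f ` S) \<and> card ((\<lambda>x. coset x S) ` f ` S) \<le> m"
    using assms unfolding uniformly_fully_inert_def quot_img[OF sg] by blast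
  have "finite (quot (set_sum (\<phi> ` (S \<times> S)) (S \<times> S)) (S \<times> S)) \<and>
        card (quot (set_sum (\<phi> ` (S \<times> S)) (S \<times> S)) (S \<times> S)) \<le> m^4" if e: "is_endo \<phi>" for \<phi> :: "'a \<times> 'a \<Rightarrow> 'a \<times> 'a"
  proof -
    define f11 where "f11 = (\<lambda>a. fst (\<phi> (a, 0)))"
    define f12 where "f12 = (\<lambda>a. fst (\<phi> (0, a)))"
    define f21 where "f21 = (\<lambda>a. snd (\<phi> (a, 0)))"
    define f22 where "f22 = (\<lambda>a. snd (\<phi> (0, a)))"
    define C where "C = (\<lambda>f. (\<lambda>x. coset x S) ` f ` S)"
    define P where "P = C f11 \<times> C f12 \<times> C f21 \<times> C f22"
    define g :: "'a set \<times> 'a set \<times> 'a set \<times> 'a set \<Rightarrow> ('a \<times> 'a) set"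
      where "g = (\<lambda>(c1, c2, c3, c4). set_sum c1 c2 \<times> set_sum c3 c4)"
    have Cf: "finite (C f) \<and> card (C f) \<le> m" if "f \<in> {f11, f12, f21, f22}" for f
      using that hm endo_comp[OF e] unfolding C_def f11_def f12_def f21_def f22_def by blast
    have fP: "finite P" unfolding P_def using Cf by auto
    have cP: "card P \<le> m^4"
    proof -
      have "card P = card (C f11) * (card (C f12) * (card (C f21) * card (C f22)))"
        unfolding P_def by (simp add: card_cartesian_product)
      also have "\<dots> \<le> m * (m * (m * m))" using Cf by (intro mult_mono) auto
      finally show ?thesis by (simp add: power4_eq_xxxx)
    qed
    have sub: "quot (set_sum (\<phi> ` (S \<times> S)) (S \<times> S)) (S \<times> S) \<subseteq> g ` P"
    proof
      fix D assume "D \<in> quot (set_sum (\<phi> ` (S \<times> S)) (S \<times> S)) (S \<times> S)"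
      then obtain s1 s2 where s: "s1 \<in> S" "s2 \<in> S" and D: "D = coset (\<phi> (s1, s2)) (S \<times> S)"
        unfolding quot_img[OF sg_prod[OF sg]] by auto
      have "D = coset (f11 s1 + f12 s2, f21 s1 + f22 s2) (S \<times> S)"
        unfolding D f11_def f12_def f21_def f22_def using endo_comp(5)[OF e] by metis
      also have "\<dots> = g (coset (f11 s1) S, coset (f12 s2) S, coset (f21 s1) S, coset (f22 s2) S)"
        unfolding g_def coset_prod by (simp add: coset_add[OF sg])
      finally show "D \<in> g ` P" unfolding P_def C_def using s by blast
    qed
    have "finite (g ` P)" using fP by simp
    moreover have "card (g ` P) \<le> m^4" using cP card_image_le[OF fP, of g] by linarith
    ultimately show ?thesis using sub card_mono finite_subset by (metis order_trans)
  qed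
  moreover have "m^4 > 0" using m by simp
  ultimately show ?thesis unfolding uniformly_fully_inert_def using sg_prod[OF sg] by blast
qed

theorem proposition2p3:
  assumes "\<forall>S :: ('a::ab_group_add \<times> 'a) set. uniformly_fully_inert S \<longrightarrow>
             (\<exists>F. fully_invariant F \<and> commensurable S F)"
  shows "\<forall>S :: 'a set. uniformly_fully_inert S \<longrightarrow>
             (\<exists>F. fully_invariant F \<and> commensurable S F)"
proof (intro allI impI)
  fix S :: "'a set" assume u: "uniformly_fully_inert S"
  have sg: "is_subgroup S" using u unfolding uniformly_fully_inert_def by blast
  obtain F where fi: "fully_invariant F" and co: "commensurable (S \<times> S) F"
    using assms ufi_prod[OF u] by blast
  have sgF: "is_subgroup F" using fi unfolding fully_invariant_def by blast
  define F1 where "F1 = {a. (a, 0) \<in> F}"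
  have sgF1: "is_subgroup F1" unfolding is_subgroup_def F1_def
  proof (intro conjI ballI CollectI)
    show "(0, 0) \<in> F" using sgF unfolding is_subgroup_def zero_prod_def by blast
    fix x y assume "x \<in> {a. (a, 0) \<in> F}" "y \<in> {a. (a, 0) \<in> F}"
    then have "(x, 0) \<in> F" "(y, 0) \<in> F" by auto
    then have "(x, 0) + (y, 0) \<in> F" "- (x, 0) \<in> F" using sgF unfolding is_subgroup_def by blast+
    then show "(x + y, 0) \<in> F" "(- x, 0) \<in> F" by auto
  qed
  have "fully_invariant F1"
    unfolding fully_invariant_def
  proof (intro conjI sgF1 allI impI)
    fix f :: "'a \<Rightarrow> 'a" assume "is_endo f"
    then have "is_endo (\<lambda>p. (f (fst p), 0 :: 'a))" unfolding is_endo_def by simp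
    then have "(\<lambda>p. (f (fst p), 0 :: 'a)) ` F \<subseteq> F" using fi unfolding fully_invariant_def by blast
    then show "f ` F1 \<subseteq> F1" unfolding F1_def by force
  qed
  moreover have "commensurable S F1"
  proof -
    define g where "g = (\<lambda>D :: ('a \<times> 'a) set. {a. (a, 0) \<in> D})"
    have mem: "(a, 0) \<in> set_sum (S \<times> S) F" if ha: "a \<in> set_sum S F1" for a
    proof -
      obtain s t where "s \<in> S" "t \<in> F1" "a = s + t" using ha unfolding set_sum_def by blast
      moreover have "0 \<in> S" using sg unfolding is_subgroup_def by blast
      ultimately have "(s, 0) \<in> S \<times> S" "(t, 0) \<in> F" "(a, 0::'a) = (s, 0) + (t, 0)"
        unfolding F1_def by auto
      then show ?thesis unfolding set_sum_def by blast
    qed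
    have g1: "g (coset (a, 0) (S \<times> S)) = coset a S" for a
      unfolding g_def coset_char using sg unfolding is_subgroup_def by auto
    have g2: "g (coset (a, 0) F) = coset a F1" for a
      unfolding g_def coset_char F1_def by auto
    have "quot (set_sum S F1) S \<subseteq> g ` quot (set_sum (S \<times> S) F) (S \<times> S)"
    proof
      fix D assume "D \<in> quot (set_sum S F1) S"
      then obtain a where a: "a \<in> set_sum S F1" "D = coset a S" unfolding quot_def by blast
      then have "D = g (coset (a,0) (S \<times> S))"
        "coset (a,0) (S \<times> S) \<in> quot (set_sum (S \<times> S) F) (S \<times> S)"
        using g1 mem[OF a(1)] a(2) unfolding quot_def by blast+
      then show "D \<in> g ` quot (set_sum (S \<times> S) F) (S \<times> S)" by blast
    qed
    moreover have "quot (set_sum S F1) F1 \<subseteq> g ` quot (set_sum (S \<times> S) F) F"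
    proof
      fix D assume "D \<in> quot (set_sum S F1) F1"
      then obtain a where a: "a \<in> set_sum S F1" "D = coset a F1" unfolding quot_def by blast
      then have "D = g (coset (a,0) F)"
        "coset (a,0) F \<in> quot (set_sum (S \<times> S) F) F"
        using g2 mem[OF a(1)] a(2) unfolding quot_def by blast+
      then show "D \<in> g ` quot (set_sum (S \<times> S) F) F" by blast
    qed
    ultimately show ?thesis using co unfolding commensurable_def
      by (meson finite_imageI finite_subset)
  qed
  ultimately show "\<exists>F. fully_invariant F \<and> commensurable S F" by blast
qed

end
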